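(* Let $\mathscr{A},\mathscr{B}$ be $\sigma$-structures and $k>0$. Then $\mathscr{A}\leftrightarrow^{\mathbb{E}}_k\mathscr{B}$ (there is a non-empty locally invertible pair from $\mathscr{A}$ to $\mathscr{B}$) if and only if Duplicator has a winning strategy in the back-and-forth $\mathbb{E}_k$ game between $\mathscr{A}$ and $\mathscr{B}$.
   Context: $\mathbb{E}_k A=A^{\le k}$ is the set of non-empty sequences over $A$ of length $\le k$, forest-ordered by prefix $\sqsubseteq$; add the empty sequence $\bot$ as root; $s\prec s'$ means $s'$ extends $s$ by exactly one element. For any function $f:A^{\le k}\to B$, $f^*:A^{\le k}\to B^{\le k}$ is $f^*[a_1,\dots,a_j]=[f[a_1],f[a_1,a_2],\dots,f[a_1,\dots,a_j]]$ (and $f^*(\bot)=\bot$). $\mathsf{W}_{\mathscr{A},\mathscr{B}}$ is the set of pairs $(s,t)$ with $s=[a_1,\dots,a_j]$, $t=[b_1,\dots,b_j]$ of equal length such that $\{(a_i,b_i)\}$ is a partial isomorphism: $a_i=a_l\iff b_i=b_l$, and for every $n$-ary $R\in\sigma$ and indices $i_1,\dots,i_n$, $R^{\mathscr{A}}(a_{i_1},\dots,a_{i_n})\iff R^{\mathscr{B}}(b_{i_1},\dots,b_{i_n})$. $\mathcal{S}(\mathscr{A},\mathscr{B})$ is the set of functions $f:A^{\le k}\to B$ with $(s,f^*(s))\in\mathsf{W}_{\mathscr{A},\mathscr{B}}$ for all $s\in A^{\le k}$ (such $f$ are homomorphisms $\mathbb{E}_k\mathscr{A}\to\mathscr{B}$,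 where $\mathbb{E}_k\mathscr{A}$ has $R(s_1,\dots,s_n)$ iff the $s_i$ are pairwise prefix-comparable and $R^{\mathscr{A}}$ holds of their last elements). A locally invertible pair from $\mathscr{A}$ to $\mathscr{B}$ is a pair $(F,G)$ with $F\subseteq\mathcal{S}(\mathscr{A},\mathscr{B})$, $G\subseteq\mathcal{S}(\mathscr{B},\mathscr{A})$ such that: for all $f\in F$ and $s\in A^{\le k}$ there is $g\in G$ with $g^*f^*(s)=s$; and for all $g\in G$ and $t\in B^{\le k}$ there is $f\in F$ with $f^*g^*(t)=t$. It is non-empty if $F$ (equivalently $G$) is non-empty. The back-and-forth $\mathbb{E}_k$ game: positions are pairs $(s,t)$, initially $(\bot,\bot)$. In each round, either Spoiler chooses $s'\succ s$ and Duplicator responds with $t'\succ t$, giving $(s',t')$, or Spoiler chooses $t''\succ t$ and Duplicator responds with $s''\succ s$, giving $(s'',t'')$; Duplicator wins the round if the new position is in $\mathsf{W}_{\mathscr{A},\mathscr{B}}$. The game continues while moves are available (at most $k$ rounds); a winning strategy for Duplicator wins every round. *)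

theory Defs
  imports Main
begin

text \<open>A sigma-structure: the signature is a type 'r of relation symbols with an
arity function; a structure over universe type 'a interprets each symbol R as a
predicate on lists of length arity R (values on other lengths are irrelevant).\<close>

type_synonym ('r, 'a) struc = "'r \<Rightarrow> 'a list \<Rightarrow> bool"

text \<open>Domain of E_k: non-empty sequences of length at most k (the root is []).\<close>
definition seqs :: "nat \<Rightarrow> 'a list set" where
  "seqs k = {s. s \<noteq> [] \<and> length s \<le> k}"

definition star :: "('a list \<Rightarrow> 'b) \<Rightarrow> 'a list \<Rightarrow> 'b list" where
  "star f s = map (\<lambda>i. f (take (Suc i) s)) [0..<length s]"

definition W :: "('r \<Rightarrow> nat) \<Rightarrow> ('r, 'a) struc \<Rightarrow> ('r, 'b) struc
    \<Rightarrow> ('a list \<times> 'b list) set" where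
  "W ar RA RB = {(s, t). length s = length t
      \<and> (\<forall>i < length s. \<forall>l < length s. (s ! i = s ! l) \<longleftrightarrow> (t ! i = t ! l))
      \<and> (\<forall>R is. length is = ar R \<and> (\<forall>i \<in> set is. i < length s) \<longrightarrow>
            (RA R (map (\<lambda>i. s ! i) is) \<longleftrightarrow> RB R (map (\<lambda>i. t ! i) is)))}"

definition Sfun :: "nat \<Rightarrow> ('r \<Rightarrow> nat) \<Rightarrow> ('r, 'a) struc \<Rightarrow> ('r, 'b) struc
    \<Rightarrow> ('a list \<Rightarrow> 'b) set" where
  "Sfun k ar RA RB = {f. \<forall>s \<in> seqs k. (s, star f s) \<in> W ar RA RB}"

definition locally_invertible_pair :: "nat \<Rightarrow> ('r \<Rightarrow> nat) \<Rightarrow> ('r, 'a) struc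
    \<Rightarrow> ('r, 'b) struc \<Rightarrow> ('a list \<Rightarrow> 'b) set \<Rightarrow> ('b list \<Rightarrow> 'a) set \<Rightarrow> bool" where
  "locally_invertible_pair k ar RA RB F G \<longleftrightarrow>
     F \<subseteq> Sfun k ar RA RB \<and> G \<subseteq> Sfun k ar RB RA
     \<and> (\<forall>f \<in> F. \<forall>s \<in> seqs k. \<exists>g \<in> G. star g (star f s) = s)
     \<and> (\<forall>g \<in> G. \<forall>t \<in> seqs k. \<exists>f \<in> F. star f (star g t) = t)"

definition E_equiv :: "nat \<Rightarrow> ('r \<Rightarrow> nat) \<Rightarrow> ('r, 'a) struc \<Rightarrow> ('r, 'b) struc \<Rightarrow> bool" where
  "E_equiv k ar RA RB \<longleftrightarrow>
     (\<exists>F G. locally_invertible_pair k ar RA RB F G \<and> F \<noteq> {})"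

text \<open>A Duplicator strategy consists of a response
function for Spoiler moves in A (d1) and in B (d2), given the current position.\<close>
inductive_set reach :: "nat \<Rightarrow> ('a list \<times> 'b list \<Rightarrow> 'a \<Rightarrow> 'b)
    \<Rightarrow> ('a list \<times> 'b list \<Rightarrow> 'b \<Rightarrow> 'a) \<Rightarrow> ('a list \<times> 'b list) set"
  for k d1 d2 where
  init: "([], []) \<in> reach k d1 d2"
| left: "(s, t) \<in> reach k d1 d2 \<Longrightarrow> length s < k \<Longrightarrow>
          (s @ [a], t @ [d1 (s, t) a]) \<in> reach k d1 d2"
| right: "(s, t) \<in> reach k d1 d2 \<Longrightarrow> length s < k \<Longrightarrow>
          (s @ [d2 (s, t) b], t @ [b]) \<in> reach k d1 d2"

definition winning_strategy :: "nat \<Rightarrow> ('r \<Rightarrow> nat) \<Rightarrow> ('r, 'a) struc \<Rightarrow> ('r, 'b) struc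
    \<Rightarrow> ('a list \<times> 'b list \<Rightarrow> 'a \<Rightarrow> 'b) \<Rightarrow> ('a list \<times> 'b list \<Rightarrow> 'b \<Rightarrow> 'a) \<Rightarrow> bool" where
  "winning_strategy k ar RA RB d1 d2 \<longleftrightarrow>
     (\<forall>p \<in> reach k d1 d2. p \<noteq> ([], []) \<longrightarrow> p \<in> W ar RA RB)"

definition duplicator_wins :: "nat \<Rightarrow> ('r \<Rightarrow> nat) \<Rightarrow> ('r, 'a) struc \<Rightarrow> ('r, 'b) struc \<Rightarrow> bool" where
  "duplicator_wins k ar RA RB \<longleftrightarrow> (\<exists>d1 d2. winning_strategy k ar RA RB d1 d2)"

end

theory Submission
  imports Defs
begin

primrec hr :: "('a list \<times> 'b list \<Rightarrow> 'b \<Rightarrow> 'a) \<Rightarrow> 'a list \<Rightarrow> 'b list \<Rightarrow> 'b list \<Rightarrow> 'a list" where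
  "hr d s0 t0 [] = []"
| "hr d s0 t0 (b # rt) = (if take (Suc (length rt)) t0 = rev (b # rt) then take (Suc (length rt)) s0
      else hr d s0 t0 rt @ [d (hr d s0 t0 rt, rev rt) b])"

definition H where "H d s0 t0 t = hr d s0 t0 (rev t)"

lemma H_nil[simp]: "H d s0 t0 [] = []" by (simp add: H_def)

lemma H_snoc: "H d s0 t0 (t @ [b]) = (if take (Suc (length t)) t0 = t @ [b] then take (Suc (length t)) s0
      else H d s0 t0 t @ [d (H d s0 t0 t, t) b])"
  by (simp add: H_def)

lemma H_len: "length s0 = length t0 \<Longrightarrow> length (H d s0 t0 t) = length t"
proof (induction t rule: rev_induct)
  case (snoc b t)
  show ?case
  proof (cases "take (Suc (length t)) t0 = t @ [b]")
    case True
    have ml: "Suc (length t) \<le> length t0" using arg_cong[OF True, of length] by simp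
    then show ?thesis using True snoc by (simp add: H_snoc min_def)
  qed (use snoc in \<open>simp add: H_snoc\<close>)
qed simp

lemma H_pref: "take (length t) t0 = t \<Longrightarrow> H d s0 t0 t = take (length t) s0"
proof (induction t rule: rev_induct)
  case (snoc b t)
  then show ?case by (simp add: H_snoc)
qed simp

lemma take_snoc_pref: "take (Suc (length ys)) xs = ys @ [b] \<Longrightarrow> take (length ys) xs = ys"
proof -
  assume a: "take (Suc (length ys)) xs = ys @ [b]"
  have "take (length ys) (take (Suc (length ys)) xs) = take (length ys) xs" by (simp add: min_def)
  with a show ?thesis by simp
qed

lemma H_take: "length s0 = length t0 \<Longrightarrow> H d s0 t0 (take i t) = take i (H d s0 t0 t)"
proof (induction t arbitrary: i rule: rev_induct)
  case Nil then show ?case by simp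
next
  case (snoc b t)
  have lt: "length (H d s0 t0 t) = length t" using H_len snoc.prems by blast
  show ?case
  proof (cases "i \<le> length t")
    case True
    have A: "take i (H d s0 t0 (t @ [b])) = take i (H d s0 t0 t)"
    proof (cases "take (Suc (length t)) t0 = t @ [b]")
      case True
      have "take (length t) t0 = t" using take_snoc_pref[OF True] .
      then have "H d s0 t0 t = take (length t) s0" by (rule H_pref)
      with True \<open>i \<le> length t\<close> show ?thesis by (simp add: H_snoc min_def)
    next
      case False
      then show ?thesis using lt \<open>i \<le> length t\<close> by (simp add: H_snoc)
    qed
    show ?thesis using True A snoc.IH[of i] snoc.prems by simp
  next
    case False
    have "length (H d s0 t0 (t @ [b])) = Suc (length t)" using H_len snoc.prems by fastforce
    then show ?thesis using False by simp
  qed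
qed

lemma star_snoc: "star f (s @ [a]) = star f s @ [f (s @ [a])]"
  by (simp add: star_def)

lemma star_nil[simp]: "star f [] = []" by (simp add: star_def)

lemma star_H: assumes "length s0 = length t0"
  shows "star (\<lambda>t. last (H d s0 t0 t)) t = H d s0 t0 t"
proof -
  have L: "length (H d s0 t0 t) = length t" using H_len assms by blast
  show ?thesis unfolding star_def
  proof (rule nth_equalityI)
    fix i assume "i < length (map (\<lambda>i. last (H d s0 t0 (take (Suc i) t))) [0..<length t])"
    then have i: "i < length t" by simp
    have "last (H d s0 t0 (take (Suc i) t)) = last (take (Suc i) (H d s0 t0 t))"
      using H_take[OF assms] by simp
    also have "\<dots> = H d s0 t0 t ! i" using i L by (simp add: take_Suc_conv_app_nth)
    finally show "map (\<lambda>i. last (H d s0 t0 (take (Suc i) t))) [0..<length t] ! i = H d s0 t0 t ! i"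
      using i by simp
  qed (use L in simp)
qed

lemma build:
  assumes ext: "\<And>s t b. (s,t)\<in>P \<Longrightarrow> length t < k \<Longrightarrow> (s @ [d (s,t) b], t @ [b]) \<in> P"
    and pre: "\<And>s t i. (s,t)\<in>P \<Longrightarrow> (take i s, take i t) \<in> P"
    and lenP: "\<And>s t. (s,t)\<in>P \<Longrightarrow> length s = length t"
    and init: "([],[]) \<in> P" and p0: "(s0,t0) \<in> P"
  shows "\<exists>g. star g t0 = s0 \<and> (\<forall>t. length t \<le> k \<longrightarrow> (star g t, t) \<in> P)"
proof -
  have l0: "length s0 = length t0" using lenP p0 by blast
  define g where "g = (\<lambda>t. last (H d s0 t0 t))"
  have sg: "star g t = H d s0 t0 t" for t unfolding g_def using star_H l0 by blast
  have "length t \<le> k \<longrightarrow> (H d s0 t0 t, t) \<in> P" for t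
  proof (induction t rule: rev_induct)
    case Nil then show ?case using init by simp
  next
    case (snoc b t)
    show ?case
    proof
      assume lk: "length (t @ [b]) \<le> k"
      show "(H d s0 t0 (t @ [b]), t @ [b]) \<in> P"
      proof (cases "take (Suc (length t)) t0 = t @ [b]")
        case True
        then show ?thesis using pre[OF p0, of "Suc (length t)"] by (simp add: H_snoc)
      next
        case False
        then show ?thesis using ext[of "H d s0 t0 t" t b] snoc lk by (simp add: H_snoc)
      qed
    qed
  qed
  then have hP: "\<forall>t. length t \<le> k \<longrightarrow> (star g t, t) \<in> P" using sg by simp
  have "H d s0 t0 t0 = take (length t0) s0" by (rule H_pref) simp
  then have "H d s0 t0 t0 = s0" using l0 by simp
  then show ?thesis using sg hP by metis
qed

lemma reach_len: "(s,t) \<in> reach k d1 d2 \<Longrightarrow> length s = length t \<and> length s \<le> k"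
  by (induction rule: reach.induct) auto

lemma reach_take: "(s,t) \<in> reach k d1 d2 \<Longrightarrow> (take i s, take i t) \<in> reach k d1 d2"
proof (induction arbitrary: i rule: reach.induct)
  case init then show ?case by (simp add: reach.init)
next
  case (left s t a)
  have "length s = length t" using reach_len left.hyps(1) by blast
  then show ?case using left.IH[of i] reach.left[OF left.hyps]
    by (cases "i \<le> length s") simp_all
next
  case (right s t b)
  have "length s = length t" using reach_len right.hyps(1) by blast
  then show ?case using right.IH[of i] reach.right[OF right.hyps]
    by (cases "i \<le> length s") simp_all
qed

lemma W_sym:
  assumes "(s,t) \<in> W ar RA RB" shows "(t,s) \<in> W ar RB RA"
proof -
  have l: "length s = length t"
    and e: "\<And>i l. i < length s \<Longrightarrow> l < length s \<Longrightarrow> (s ! i = s ! l) \<longleftrightarrow> (t ! i = t ! l)"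
    and r: "\<And>R is. length is = ar R \<Longrightarrow> (\<forall>i \<in> set is. i < length s) \<Longrightarrow>
            (RA R (map (\<lambda>i. s ! i) is) \<longleftrightarrow> RB R (map (\<lambda>i. t ! i) is))"
    using assms unfolding W_def by auto
  show ?thesis unfolding W_def
  proof (simp only: mem_Collect_eq case_prod_conv, intro conjI allI impI)
    show "length t = length s" using l by simp
  next
    fix i l assume "i < length t" "l < length t"
    then show "(t ! i = t ! l) \<longleftrightarrow> (s ! i = s ! l)" using e l by simp
  next
    fix R "is" assume "length is = ar R \<and> (\<forall>i \<in> set is. i < length t)"
    then show "RB R (map (\<lambda>i. t ! i) is) \<longleftrightarrow> RA R (map (\<lambda>i. s ! i) is)" using r l by simp
  qed
qed

lemma star_len[simp]: "length (star f s) = length s" by (simp add: star_def)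

theorem mainTheorem6:
  fixes k :: nat and ar :: "'r \<Rightarrow> nat"
    and RA :: "('r, 'a) struc" and RB :: "('r, 'b) struc"
  assumes "k > 0"
  shows "E_equiv k ar RA RB \<longleftrightarrow> duplicator_wins k ar RA RB"
proof
  assume "E_equiv k ar RA RB"
  then obtain F G where LI: "locally_invertible_pair k ar RA RB F G" and Fne: "F \<noteq> {}"
    unfolding E_equiv_def by blast
  note L = LI[unfolded locally_invertible_pair_def]
  define d1 where "d1 = (\<lambda>(s::'a list,t::'b list) a. (SOME f. f \<in> F \<and> star f s = t) (s @ [a]))"
  define d2 where "d2 = (\<lambda>(s::'a list,t::'b list) b. (SOME g. g \<in> G \<and> star g t = s) (t @ [b]))"
  define I where "I = (\<lambda>(s::'a list,t::'b list). (\<exists>f\<in>F. star f s = t) \<and> (\<exists>g\<in>G. star g t = s) \<and> length s \<le> k)"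
  have inv: "(s,t) \<in> reach k d1 d2 \<Longrightarrow> I (s,t)" for s t
  proof (induction rule: reach.induct)
    case init
    obtain f where f: "f \<in> F" using Fne by blast
    have "[undefined] \<in> seqs k" using assms by (simp add: seqs_def)
    then obtain g where "g \<in> G" using L f by blast
    then show ?case using f unfolding I_def by auto
  next
    case (left s t a)
    then obtain f0 where "f0 \<in> F" "star f0 s = t" unfolding I_def by auto
    then have ex: "\<exists>f. f \<in> F \<and> star f s = t" by blast
    define f where "f = (SOME f. f \<in> F \<and> star f s = t)"
    have f: "f \<in> F" "star f s = t" using someI_ex[OF ex] unfolding f_def by auto
    have dd: "d1 (s,t) a = f (s @ [a])" unfolding d1_def f_def by simp
    have sq: "s @ [a] \<in> seqs k" using left.hyps(2) by (simp add: seqs_def)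
    have st: "star f (s @ [a]) = t @ [d1 (s,t) a]" using f dd by (simp add: star_snoc)
    obtain g where "g \<in> G" "star g (star f (s @ [a])) = s @ [a]" using L f(1) sq by blast
    then show ?case using f st left.hyps(2) unfolding I_def by auto
  next
    case (right s t b)
    then obtain g0 where "g0 \<in> G" "star g0 t = s" unfolding I_def by auto
    then have ex: "\<exists>g. g \<in> G \<and> star g t = s" by blast
    define g where "g = (SOME g. g \<in> G \<and> star g t = s)"
    have g: "g \<in> G" "star g t = s" using someI_ex[OF ex] unfolding g_def by auto
    have dd: "d2 (s,t) b = g (t @ [b])" unfolding d2_def g_def by simp
    have lst: "length s = length t" using g by auto
    have sq: "t @ [b] \<in> seqs k" using right.hyps(2) lst by (simp add: seqs_def)
    have st: "star g (t @ [b]) = s @ [d2 (s,t) b]" using g dd by (simp add: star_snoc)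
    obtain f where "f \<in> F" "star f (star g (t @ [b])) = t @ [b]" using L g(1) sq by blast
    then show ?case using g st right.hyps(2) unfolding I_def by auto
  qed
  have "winning_strategy k ar RA RB d1 d2"
    unfolding winning_strategy_def
  proof (intro ballI impI)
    fix p assume p: "p \<in> reach k d1 d2" "p \<noteq> ([],[])"
    obtain s t where pst: "p = (s,t)" by fastforce
    from inv[OF p(1)[unfolded pst]] obtain f where f: "f \<in> F" "star f s = t" and lk: "length s \<le> k"
      unfolding I_def pst by auto
    have "s \<noteq> []" using p(2) f(2) pst by auto
    then have "s \<in> seqs k" using lk by (simp add: seqs_def)
    moreover have "f \<in> Sfun k ar RA RB" using L f(1) by blast
    ultimately show "p \<in> W ar RA RB" using f(2) pst unfolding Sfun_def by blast
  qed
  then show "duplicator_wins k ar RA RB" unfolding duplicator_wins_def by blast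
next
  assume "duplicator_wins k ar RA RB"
  then obtain d1 d2 where win: "winning_strategy k ar RA RB d1 d2"
    unfolding duplicator_wins_def by blast
  define P where "P = reach k d1 d2"
  define P' where "P' = {(t,s). (s,t) \<in> P}"
  define F where "F = {f. \<forall>u \<in> seqs k. (u, star f u) \<in> P}"
  define G where "G = {g. \<forall>t \<in> seqs k. (star g t, t) \<in> P}"
  have lenP: "\<And>s t. (s,t)\<in>P \<Longrightarrow> length s = length t" using reach_len P_def by blast
  have B1: "\<exists>g. star g t0 = s0 \<and> (\<forall>t. length t \<le> k \<longrightarrow> (star g t, t) \<in> P)" if "(s0,t0) \<in> P" for s0 t0
  proof (rule build[where d=d2])
    fix s t b assume a: "(s,t)\<in>P" "length t < k"
    have "length s = length t" using lenP[OF a(1)] .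
    then have "length s < k" using a(2) by simp
    then show "(s @ [d2 (s,t) b], t @ [b]) \<in> P" using reach.right[of s t k d1 d2 b] a(1) unfolding P_def by simp
  next
    fix s t i assume "(s,t)\<in>P" then show "(take i s, take i t) \<in> P" using reach_take[of s t k d1 d2 i] unfolding P_def by simp
  next
    fix s t assume "(s,t)\<in>P" then show "length s = length t" by (rule lenP)
  next
    show "([],[]) \<in> P" unfolding P_def by (rule reach.init)
  qed (rule that)
  have B2: "\<exists>f. star f s0 = t0 \<and> (\<forall>u. length u \<le> k \<longrightarrow> (star f u, u) \<in> P')" if "(s0,t0) \<in> P" for s0 t0
  proof (rule build[where d="\<lambda>(t,s) a. d1 (s,t) a"])
    fix t s a assume a: "(t,s)\<in>P'" "length s < k"
    then have "(s,t) \<in> P" unfolding P'_def by simp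
    then have "(s @ [a], t @ [d1 (s,t) a]) \<in> P"
      using a(2) reach.left[of s t k d1 d2 a] unfolding P_def by simp
    then show "(t @ [(\<lambda>(t,s) a. d1 (s,t) a) (t,s) a], s @ [a]) \<in> P'"
      unfolding P'_def by simp
  next
    fix t s i assume "(t,s)\<in>P'" then show "(take i t, take i s) \<in> P'" using reach_take[of s t k d1 d2 i] unfolding P_def P'_def by simp
  next
    fix t s assume "(t,s)\<in>P'" then have "(s,t) \<in> P" unfolding P'_def by simp
    then show "length t = length s" using lenP by simp
  next
    show "([],[]) \<in> P'" unfolding P'_def P_def by (simp add: reach.init)
  qed (use that in \<open>simp add: P'_def\<close>)
  have W: "(s,t) \<in> W ar RA RB" if a: "(s,t) \<in> P" "s \<in> seqs k" for s t
  proof -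
    have "(s,t) \<noteq> ([],[])" using a(2) unfolding seqs_def by simp
    then show ?thesis using win a(1) unfolding winning_strategy_def P_def by blast
  qed
  have W': "(s,t) \<in> P \<Longrightarrow> t \<in> seqs k \<Longrightarrow> (t,s) \<in> W ar RB RA" for s t
  proof -
    assume a: "(s,t) \<in> P" "t \<in> seqs k"
    have "length s = length t" using lenP[OF a(1)] .
    then have "s \<in> seqs k" using a(2) unfolding seqs_def by auto
    then have w: "(s,t) \<in> W ar RA RB" using W a by blast
    show ?thesis using w by (rule W_sym)
  qed
  have "locally_invertible_pair k ar RA RB F G"
    unfolding locally_invertible_pair_def
  proof (intro conjI)
    show "F \<subseteq> Sfun k ar RA RB"
    proof
      fix f assume "f \<in> F"
      then have "\<forall>u \<in> seqs k. (u, star f u) \<in> P" unfolding F_def by simp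
      then have "\<forall>u \<in> seqs k. (u, star f u) \<in> W ar RA RB" using W by simp
      then show "f \<in> Sfun k ar RA RB" unfolding Sfun_def by simp
    qed
    show "G \<subseteq> Sfun k ar RB RA"
    proof
      fix g assume "g \<in> G"
      then have "\<forall>u \<in> seqs k. (star g u, u) \<in> P" unfolding G_def by simp
      then have "\<forall>u \<in> seqs k. (u, star g u) \<in> W ar RB RA" using W' by simp
      then show "g \<in> Sfun k ar RB RA" unfolding Sfun_def by simp
    qed
    show "\<forall>f\<in>F. \<forall>s\<in>seqs k. \<exists>g\<in>G. star g (star f s) = s"
    proof (intro ballI)
      fix f and s :: "'a list" assume "f \<in> F" "s \<in> seqs k"
      then have "(s, star f s) \<in> P" unfolding F_def by blast
      from B1[OF this] obtain g where g: "star g (star f s) = s" "\<forall>t. length t \<le> k \<longrightarrow> (star g t, t) \<in> P" by blast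
      then have "g \<in> G" unfolding G_def seqs_def by simp
      with g(1) show "\<exists>g\<in>G. star g (star f s) = s" by blast
    qed
    show "\<forall>g\<in>G. \<forall>t\<in>seqs k. \<exists>f\<in>F. star f (star g t) = t"
    proof (intro ballI)
      fix g and t :: "'b list" assume "g \<in> G" "t \<in> seqs k"
      then have "(star g t, t) \<in> P" unfolding G_def by blast
      from B2[OF this] obtain f where f: "star f (star g t) = t" "\<forall>u. length u \<le> k \<longrightarrow> (star f u, u) \<in> P'" by blast
      then have "f \<in> F" unfolding F_def seqs_def P'_def by simp
      with f(1) show "\<exists>f\<in>F. star f (star g t) = t" by blast
    qed
  qed
  moreover have "F \<noteq> {}"
  proof -
    have "([],[]) \<in> P" unfolding P_def by (rule reach.init)
    from B2[OF this] obtain f where "\<forall>u. length u \<le> k \<longrightarrow> (star f u, u) \<in> P'" by blast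
    then have "f \<in> F" unfolding F_def P'_def seqs_def by simp
    then show ?thesis by blast
  qed
  ultimately show "E_equiv k ar RA RB" unfolding E_equiv_def by blast
qed

end
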